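(* The set of limsup functions $X \to \mathbb{R}$ is the smallest collection $\mathcal{C}$ of functions $X \to \mathbb{R}$ such that (a) $\mathcal{C}$ contains all lower semicontinuous functions $X \to \mathbb{R}$, and (b) $\mathcal{C}$ is closed under pointwise limits from above, i.e. whenever $f_0 \ge f_1 \ge \cdots$ are in $\mathcal{C}$ and converge pointwise to a function $f : X \to \mathbb{R}$, then $f \in \mathcal{C}$.
   Context: Let $A$ be a non-empty countable set and $T$ a pruned tree on $A$ (a set of finite sequences of elements of $A$, closed under initial segments, in which every sequence has a proper extension in $T$). Let $X$ be the set of infinite branches of $T$, with the topology generated by the cylinder sets $O(s) = \{x \in X : s \text{ is an initial segment of } x\}$, $s \in T$. A function $f : X \to \mathbb{R}$ is a limsup function if there exists $u : T \to \mathbb{R}$ with $f(x) = \limsup_{t\to\infty} u(x_0,\dots,x_t)$ for every $x \in X$. *)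

theory Defs
  imports "HOL-Analysis.Analysis" "HOL-Library.Liminf_Limsup"
begin

text \<open>Finite sequences are lists; the initial segment of length n of an
  infinite sequence x :: nat => 'a is map x [0..<n].\<close>

definition pruned_tree :: "'a set \<Rightarrow> 'a list set \<Rightarrow> bool" where
  "pruned_tree A T \<longleftrightarrow> T \<subseteq> lists A
     \<and> (\<forall>s\<in>T. \<forall>n. take n s \<in> T)
     \<and> (\<forall>s\<in>T. \<exists>s'\<in>T. length s < length s' \<and> take (length s) s' = s)"

definition branches :: "'a list set \<Rightarrow> (nat \<Rightarrow> 'a) set" where
  "branches T = {x. \<forall>n. map x [0..<n] \<in> T}"

definition cyl :: "'a list set \<Rightarrow> 'a list \<Rightarrow> (nat \<Rightarrow> 'a) set" where
  "cyl T s = {x \<in> branches T. map x [0..<length s] = s}"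

definition branch_topology :: "'a list set \<Rightarrow> (nat \<Rightarrow> 'a) topology" where
  "branch_topology T = topology_generated_by (cyl T ` T)"

definition lower_semicont :: "'b topology \<Rightarrow> ('b \<Rightarrow> real) \<Rightarrow> bool" where
  "lower_semicont Y f \<longleftrightarrow> (\<forall>c. openin Y {x \<in> topspace Y. c < f x})"

text \<open>Functions X -> R are represented as extensional functions on X (value undefined off X).\<close>

definition limsup_function :: "'a list set \<Rightarrow> ((nat \<Rightarrow> 'a) \<Rightarrow> real) \<Rightarrow> bool" where
  "limsup_function T f \<longleftrightarrow> (\<exists>u :: 'a list \<Rightarrow> real. \<forall>x\<in>branches T.
      ereal (f x) = limsup (\<lambda>t. ereal (u (map x [0..<Suc t]))))"

definition good_collection :: "'a list set \<Rightarrow> ((nat \<Rightarrow> 'a) \<Rightarrow> real) set \<Rightarrow> bool" where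
  "good_collection T C \<longleftrightarrow>
     C \<subseteq> branches T \<rightarrow>\<^sub>E (UNIV :: real set)
   \<and> (\<forall>f \<in> branches T \<rightarrow>\<^sub>E (UNIV :: real set).
        lower_semicont (branch_topology T) f \<longrightarrow> f \<in> C)
   \<and> (\<forall>(fs :: nat \<Rightarrow> (nat \<Rightarrow> 'a) \<Rightarrow> real) f.
        (\<forall>n. fs n \<in> C) \<and> (\<forall>n. \<forall>x\<in>branches T. fs (Suc n) x \<le> fs n x)
        \<and> f \<in> branches T \<rightarrow>\<^sub>E (UNIV :: real set)
        \<and> (\<forall>x\<in>branches T. (\<lambda>n. fs n x) \<longlonglongrightarrow> f x)
        \<longrightarrow> f \<in> C)"

end

theory Submission
  imports Defs
begin


abbreviation pre :: "(nat \<Rightarrow> 'a) \<Rightarrow> nat \<Rightarrow> 'a list" where "pre x n \<equiv> map x [0..<n]"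

lemma pre_eq_iff: "pre y n = pre x n \<longleftrightarrow> (\<forall>i<n. y i = x i)"
  by (auto simp: list_eq_iff_nth_eq)

lemma branch_topspace: "topspace (branch_topology T) = branches T"
proof -
  have "\<Union>(cyl T ` T) = branches T"
  proof
    show "\<Union>(cyl T ` T) \<subseteq> branches T" by (auto simp: cyl_def)
    show "branches T \<subseteq> \<Union>(cyl T ` T)"
    proof
      fix x assume x: "x \<in> branches T"
      then have "pre x 0 \<in> T" unfolding branches_def by blast
      moreover have "x \<in> cyl T (pre x 0)" using x by (simp add: cyl_def)
      ultimately show "x \<in> \<Union>(cyl T ` T)" by blast
    qed
  qed
  then show ?thesis by (simp add: branch_topology_def)
qed

lemma open_cyl:
  assumes "openin (branch_topology T) U" "x \<in> U"
  shows "\<exists>n. \<forall>y\<in>branches T. (\<forall>i<n. y i = x i) \<longrightarrow> y \<in> U"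
proof -
  have "generate_topology_on (cyl T ` T) U"
    using assms(1) by (simp add: branch_topology_def openin_topology_generated_by_iff)
  then show ?thesis using assms(2)
  proof (induction arbitrary: x rule: generate_topology_on.induct)
    case Empty then show ?case by simp
  next
    case (Int a b)
    then obtain n1 n2 where "\<forall>y\<in>branches T. (\<forall>i<n1. y i = x i) \<longrightarrow> y \<in> a"
      "\<forall>y\<in>branches T. (\<forall>i<n2. y i = x i) \<longrightarrow> y \<in> b" by blast
    then show ?case by (intro exI[of _ "max n1 n2"]) auto
  next
    case (UN K)
    then obtain k where "k \<in> K" "x \<in> k" by blast
    with UN obtain n where "\<forall>y\<in>branches T. (\<forall>i<n. y i = x i) \<longrightarrow> y \<in> k" by blast
    with \<open>k \<in> K\<close> show ?case by blast
  next
    case (Basis s)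
    then obtain t where t: "s = cyl T t" by blast
    with Basis have "pre x (length t) = t" by (simp add: cyl_def)
    then show ?case using t
      by (intro exI[of _ "length t"]) (auto simp: cyl_def pre_eq_iff simp flip: pre_eq_iff)
  qed
qed

lemma cyl_open:
  assumes "x \<in> branches T"
  shows "openin (branch_topology T) {y \<in> branches T. \<forall>i<n. y i = x i}"
proof -
  have T: "pre x n \<in> T" using assms by (simp add: branches_def)
  have eq: "{y \<in> branches T. \<forall>i<n. y i = x i} = cyl T (pre x n)"
    unfolding cyl_def length_map length_upt diff_zero pre_eq_iff by simp
  have "generate_topology_on (cyl T ` T) (cyl T (pre x n))"
    by (rule generate_topology_on.Basis) (use T in blast)
  then show ?thesis
    unfolding branch_topology_def openin_topology_generated_by_iff eq .
qed

definition lscC :: "'a list set \<Rightarrow> ((nat \<Rightarrow> 'a) \<Rightarrow> ereal) \<Rightarrow> bool" where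
  "lscC T h \<longleftrightarrow> (\<forall>x\<in>branches T. \<forall>c. c < h x \<longrightarrow> (\<exists>n. \<forall>y\<in>branches T. (\<forall>i<n. y i = x i) \<longrightarrow> c < h y))"

lemma lsc_imp_lscC:
  assumes "lower_semicont (branch_topology T) f"
  shows "lscC T (\<lambda>x. ereal (f x))"
  unfolding lscC_def
proof (intro ballI allI impI)
  fix x c assume x: "x \<in> branches T" and c: "c < ereal (f x)"
  obtain r where r0: "c < ereal r" "ereal r < ereal (f x)"
    using ereal_dense2[OF c] by blast
  then have r: "c < ereal r" "r < f x" by auto
  have op: "openin (branch_topology T) {y \<in> branches T. r < f y}"
    using assms unfolding lower_semicont_def branch_topspace by blast
  have xin: "x \<in> {y \<in> branches T. r < f y}" using x r by simp
  obtain n where n: "\<forall>y\<in>branches T. (\<forall>i<n. y i = x i) \<longrightarrow> r < f y"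
    using open_cyl[OF op xin] by auto
  show "\<exists>n. \<forall>y\<in>branches T. (\<forall>i<n. y i = x i) \<longrightarrow> c < ereal (f y)"
  proof (intro exI[of _ n] ballI impI)
    fix y assume "y \<in> branches T" "\<forall>i<n. y i = x i"
    with n have "r < f y" by blast
    then have "ereal r < ereal (f y)" by simp
    with r(1) show "c < ereal (f y)" by (rule less_trans)
  qed
qed

lemma lscC_imp_lsc:
  assumes "\<forall>x\<in>branches T. \<forall>c. c < f x \<longrightarrow> (\<exists>n. \<forall>y\<in>branches T. (\<forall>i<n. y i = x i) \<longrightarrow> c < f y)"
  shows "lower_semicont (branch_topology T) f"
  unfolding lower_semicont_def branch_topspace
proof
  fix c
  let ?S = "{y \<in> branches T. c < f y}"
  let ?F = "{{y \<in> branches T. \<forall>i<n. y i = x i} | x n. x \<in> branches T \<and> {y \<in> branches T. \<forall>i<n. y i = x i} \<subseteq> ?S}"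
  have sub: "\<Union>?F \<subseteq> ?S" by blast
  have sup: "?S \<subseteq> \<Union>?F"
  proof
    fix x assume "x \<in> ?S"
    then have x: "x \<in> branches T" "c < f x" by auto
    with assms obtain n where n: "\<forall>y\<in>branches T. (\<forall>i<n. y i = x i) \<longrightarrow> c < f y" by meson
    have "{y \<in> branches T. \<forall>i<n. y i = x i} \<in> ?F" using x n by blast
    moreover have "x \<in> {y \<in> branches T. \<forall>i<n. y i = x i}" using x by simp
    ultimately show "x \<in> \<Union>?F" by blast
  qed
  have "openin (branch_topology T) (\<Union>?F)"
    by (rule openin_Union) (auto intro: cyl_open)
  moreover have "\<Union>?F = ?S" using sub sup by (rule antisym)
  ultimately show "openin (branch_topology T) ?S" by simp
qed



lemma crossing:
  fixes g :: "nat \<Rightarrow> nat"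
  assumes "mono g" "g N \<le> K" "K < g n"
  shows "\<exists>t\<ge>N. g t \<le> K \<and> K < g (Suc t)"
  using assms(2,3)
proof (induction n)
  case 0
  then have "g 0 > g N" by simp
  moreover have "g 0 \<le> g N" using assms(1) by (simp add: monoD)
  ultimately show ?case by simp
next
  case (Suc n)
  show ?case
  proof (cases "K < g n")
    case True then show ?thesis using Suc by blast
  next
    case False
    then have "g n \<le> K" by simp
    moreover have "N \<le> n"
    proof (rule ccontr)
      assume "\<not> N \<le> n"
      then have "Suc n \<le> N" by simp
      then have "g (Suc n) \<le> g N" using assms(1) by (simp add: monoD)
      then show False using Suc by simp
    qed
    ultimately show ?thesis using Suc by blast
  qed
qed

lemma events_unbounded:
  fixes g :: "nat \<Rightarrow> nat"
  assumes "mono g" "\<forall>N. \<exists>t\<ge>N. g t < g (Suc t)"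
  shows "\<exists>n. M \<le> g n"
proof (induction M)
  case 0 then show ?case by simp
next
  case (Suc M)
  then obtain n where n: "M \<le> g n" by blast
  from assms(2) obtain t where t: "t \<ge> n" "g t < g (Suc t)" by blast
  have "g n \<le> g t" using assms(1) t(1) by (simp add: monoD)
  then show ?case using n t by (intro exI[of _ "Suc t"]) simp
qed

lemma finite_to_nat_le: "finite {q::rat. to_nat q \<le> n}"
proof -
  have "{q::rat. to_nat q \<le> n} = to_nat -` {..n}" by auto
  then show ?thesis by (metis finite_atMost finite_vimageI inj_to_nat)
qed

context
  fixes T :: "'a list set" and h :: "nat \<Rightarrow> (nat \<Rightarrow> 'a) \<Rightarrow> ereal" and f :: "(nat \<Rightarrow> 'a) \<Rightarrow> real"
  assumes hl: "\<And>k. lscC T (h k)"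
    and hd: "\<And>k x. x \<in> branches T \<Longrightarrow> h (Suc k) x \<le> h k x"
    and hf: "\<And>x. x \<in> branches T \<Longrightarrow> (INF k. h k x) = ereal (f x)"
begin

definition PP :: "real \<Rightarrow> nat \<Rightarrow> (nat \<Rightarrow> 'a) \<Rightarrow> bool" where
  "PP q m y \<longleftrightarrow> ereal (q - 1 / real (Suc m)) < h m y"

definition fits :: "real \<Rightarrow> nat \<Rightarrow> 'a list \<Rightarrow> bool" where
  "fits q m s \<longleftrightarrow> (\<forall>y\<in>branches T. pre y (length s) = s \<longrightarrow> PP q m y)"

definition cc :: "real \<Rightarrow> 'a list \<Rightarrow> nat" where
  "cc q s = Max {m. m \<le> length s \<and> (m = 0 \<or> fits q m s)}"

definition uu :: "'a list \<Rightarrow> real" where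
  "uu s = Max (insert (- real (length s))
     {of_rat q | q. to_nat q \<le> cc (of_rat q) s \<and> cc (of_rat q) (butlast s) < cc (of_rat q) s})"

lemma butlast_pre[simp]: "butlast (pre x (Suc t)) = pre x t"
  by simp

lemma hdec_le: assumes "x \<in> branches T" "k \<le> m" shows "h m x \<le> h k x"
  using assms(2)
proof (induction m rule: dec_induct)
  case (step n)
  from hd[OF assms(1), of n] step.IH show ?case by (rule order_trans)
qed simp

lemma PP_mono_Suc: assumes "x \<in> branches T" "PP q (Suc m) x" shows "PP q m x"
proof -
  have "ereal (q - 1 / real (Suc m)) \<le> ereal (q - 1 / real (Suc (Suc m)))"
    by (simp add: frac_le)
  also have "\<dots> < h (Suc m) x" using assms(2) by (simp add: PP_def)
  also have "\<dots> \<le> h m x" using hd[OF assms(1)] .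
  finally show ?thesis by (simp add: PP_def)
qed

lemma PP_mono_le: assumes "x \<in> branches T" "m \<le> M" "PP q M x" shows "PP q m x"
  using assms(2,3)
proof (induction M rule: dec_induct)
  case (step n)
  then show ?case using PP_mono_Suc[OF assms(1)] by blast
qed simp

lemma PP_mono_q: "r \<le> q \<Longrightarrow> PP q m x \<Longrightarrow> PP r m x"
  unfolding PP_def by (erule le_less_trans[rotated]) simp

lemma PP_ge: assumes "x \<in> branches T" "q \<le> f x" shows "PP q m x"
proof -
  have "ereal (q - 1 / real (Suc m)) < ereal q" by simp
  also have "\<dots> \<le> ereal (f x)" using assms(2) by simp
  also have "\<dots> \<le> h m x" using hf[OF assms(1)] by (metis INF_lower UNIV_I)
  finally show ?thesis by (simp add: PP_def)
qed

lemma PP_all: assumes x: "x \<in> branches T" and all: "\<forall>m. PP q m x" shows "q \<le> f x"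
proof -
  have "ereal q \<le> h k x" for k
  proof (rule ccontr)
    assume "\<not> ereal q \<le> h k x"
    then have lt: "h k x < ereal q" by simp
    have "ereal (q - 1 / real (Suc k)) < h k x" using all by (simp add: PP_def)
    then obtain t where t: "h k x = ereal t" using lt
      by (cases "h k x") auto
    with lt have "t < q" by simp
    then obtain m where m: "1 / real (Suc m) < q - t"
      by (metis diff_gt_0_iff_gt nat_approx_posE)
    define m' where "m' = max m k"
    have "1 / real (Suc m') \<le> 1 / real (Suc m)" by (simp add: m'_def frac_le)
    with m have tq: "t < q - 1 / real (Suc m')" by simp
    have a: "ereal (q - 1 / real (Suc m')) < h m' x" using all by (simp add: PP_def)
    have b: "h m' x \<le> ereal t" using hdec_le[OF x, of k m'] t by (simp add: m'_def)
    have "ereal (q - 1 / real (Suc m')) < ereal t" using less_le_trans[OF a b] .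
    then have "q - 1 / real (Suc m') < t" by simp
    with tq show False by simp
  qed
  then have "ereal q \<le> (INF k. h k x)" by (simp add: INF_greatest)
  then show ?thesis using hf[OF x] by simp
qed

lemma PP_open: assumes "x \<in> branches T" "PP q m x"
  shows "\<exists>n. \<forall>y\<in>branches T. (\<forall>i<n. y i = x i) \<longrightarrow> PP q m y"
  using hl[of m] assms unfolding lscC_def PP_def by blast

lemma cc_finite: "finite {m. m \<le> length s \<and> (m = 0 \<or> fits q m s)}"
  by (rule finite_subset[of _ "{..length s}"]) auto

lemma cc_in: "cc q s \<in> {m. m \<le> length s \<and> (m = 0 \<or> fits q m s)}"
  unfolding cc_def by (rule Max_in[OF cc_finite]) auto

lemma cc_le: "cc q s \<le> length s"
  using cc_in[of q s] by simp

lemma cc_fits: "0 < cc q s \<Longrightarrow> fits q (cc q s) s"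
  using cc_in[of q s] by simp

lemma cc_ge: "m \<le> length s \<Longrightarrow> fits q m s \<Longrightarrow> m \<le> cc q s"
  unfolding cc_def by (rule Max_ge[OF cc_finite]) auto

lemma fits_Suc: "fits q m (pre x n) \<Longrightarrow> fits q m (pre x (Suc n))"
  unfolding fits_def by (auto simp: pre_eq_iff simp del: upt_Suc)

lemma cc_mono: "mono (\<lambda>n. cc q (pre x n))"
proof (rule incseq_SucI)
  fix n
  show "cc q (pre x n) \<le> cc q (pre x (Suc n))"
  proof (cases "cc q (pre x n) = 0")
    case False
    then have "fits q (cc q (pre x n)) (pre x (Suc n))"
      using cc_fits fits_Suc by blast
    moreover have "cc q (pre x n) \<le> length (pre x (Suc n))"
      using cc_le[of q "pre x n"] by simp
    ultimately show ?thesis using cc_ge by blast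
  qed simp
qed

lemma cc_PP: assumes "x \<in> branches T" "1 \<le> M" "M \<le> cc q (pre x n)" shows "PP q M x"
proof -
  have "fits q (cc q (pre x n)) (pre x n)" using assms cc_fits by simp
  then have "PP q (cc q (pre x n)) x" using assms(1) by (simp add: fits_def)
  then show ?thesis using PP_mono_le assms by blast
qed

lemma cc_unbounded: assumes x: "x \<in> branches T" and q: "q \<le> f x"
  shows "\<exists>n. M \<le> cc q (pre x n)"
proof (cases "M = 0")
  case False
  obtain d where d: "\<forall>y\<in>branches T. (\<forall>i<d. y i = x i) \<longrightarrow> PP q M y"
    using PP_open[OF x PP_ge[OF x q]] by blast
  define n where "n = max M d"
  have "fits q M (pre x n)"
    unfolding fits_def using d by (auto simp: pre_eq_iff n_def)
  then have "M \<le> cc q (pre x n)" by (rule cc_ge[rotated]) (simp add: n_def)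
  then show ?thesis by blast
qed simp

lemma uu_finite: "finite {of_rat q | q. to_nat q \<le> cc (of_rat q) s \<and> cc (of_rat q) (butlast s) < cc (of_rat q) s}"
proof -
  have "{of_rat q | q. to_nat q \<le> cc (of_rat q) s \<and> cc (of_rat q) (butlast s) < cc (of_rat q) s}
     \<subseteq> of_rat ` {q. to_nat q \<le> length s}"
    using cc_le by (auto intro: order_trans)
  then show ?thesis using finite_to_nat_le finite_subset by blast
qed

lemma uu_lower: assumes x: "x \<in> branches T" and q: "of_rat q \<le> f x"
  shows "\<exists>t\<ge>N. of_rat q \<le> uu (pre x (Suc t))"
proof -
  define g where "g n = cc (of_rat q) (pre x n)" for n
  have mg: "mono g" unfolding g_def by (rule cc_mono)
  define K where "K = max (to_nat q) (g N)"
  obtain n where n: "Suc K \<le> g n" using cc_unbounded[OF x q] unfolding g_def by blast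
  have gN: "g N \<le> K" by (simp add: K_def)
  have gn: "K < g n" using n by simp
  obtain t where t: "t \<ge> N" "g t \<le> K" "K < g (Suc t)"
    using crossing[OF mg gN gn] by blast
  have "of_rat q \<in> {of_rat q | q. to_nat q \<le> cc (of_rat q) (pre x (Suc t))
      \<and> cc (of_rat q) (butlast (pre x (Suc t))) < cc (of_rat q) (pre x (Suc t))}"
    using t by (auto simp: g_def K_def simp del: upt_Suc)
  then have "of_rat q \<le> uu (pre x (Suc t))"
    unfolding uu_def
    by (intro Max_ge) (use uu_finite[of "pre x (Suc t)", unfolded butlast_pre] in \<open>auto simp del: upt_Suc\<close>)
  then show ?thesis using t by blast
qed

lemma uu_cases:
  "uu s = - real (length s) \<or> (\<exists>q. uu s = of_rat q \<and> to_nat q \<le> cc (of_rat q) s \<and> cc (of_rat q) (butlast s) < cc (of_rat q) s)"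
proof -
  have "uu s \<in> insert (- real (length s))
     {of_rat q | q. to_nat q \<le> cc (of_rat q) s \<and> cc (of_rat q) (butlast s) < cc (of_rat q) s}"
    unfolding uu_def by (rule Max_in) (auto intro: uu_finite)
  then show ?thesis by auto
qed


lemma uu_upper: assumes x: "x \<in> branches T" and fr: "\<forall>N. \<exists>t\<ge>N. r \<le> uu (pre x (Suc t))"
  shows "r \<le> f x"
proof -
  define S where "S = {t. r \<le> uu (pre x (Suc t)) \<and> - real (Suc t) < r}"
  have infS: "infinite S"
    unfolding infinite_nat_iff_unbounded_le
  proof
    fix m
    obtain N0 :: nat where N0: "- r < real N0" using reals_Archimedean2 by blast
    obtain t where t: "t \<ge> max m N0" "r \<le> uu (pre x (Suc t))" using fr by blast
    have "- real (Suc t) < r" using t(1) N0 by simp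
    then show "\<exists>n\<ge>m. n \<in> S" using t unfolding S_def by auto
  qed
  have ex: "\<forall>t\<in>S. \<exists>q. uu (pre x (Suc t)) = of_rat q \<and> to_nat q \<le> cc (of_rat q) (pre x (Suc t))
      \<and> cc (of_rat q) (pre x t) < cc (of_rat q) (pre x (Suc t))"
  proof
    fix t assume "t \<in> S"
    then have "r \<le> uu (pre x (Suc t))" "- real (Suc t) < r" by (auto simp: S_def)
    then have "uu (pre x (Suc t)) \<noteq> - real (length (pre x (Suc t)))" by simp
    then show "\<exists>q. uu (pre x (Suc t)) = of_rat q \<and> to_nat q \<le> cc (of_rat q) (pre x (Suc t))
      \<and> cc (of_rat q) (pre x t) < cc (of_rat q) (pre x (Suc t))"
      using uu_cases[of "pre x (Suc t)"] unfolding butlast_pre by blast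
  qed
  obtain qt where qt: "\<forall>t\<in>S. uu (pre x (Suc t)) = of_rat (qt t) \<and> to_nat (qt t) \<le> cc (of_rat (qt t)) (pre x (Suc t))
      \<and> cc (of_rat (qt t)) (pre x t) < cc (of_rat (qt t)) (pre x (Suc t))"
    using bchoice[OF ex] by blast
  have PM: "PP r M x" if M1: "1 \<le> M" for M
  proof -
    have "\<exists>t\<in>S. M \<le> cc (of_rat (qt t)) (pre x (Suc t))"
    proof (rule ccontr)
      assume "\<not> ?thesis"
      then have lt: "\<forall>t\<in>S. cc (of_rat (qt t)) (pre x (Suc t)) < M" by auto
      have "qt ` S \<subseteq> {q. to_nat q \<le> M}"
      proof
        fix q assume "q \<in> qt ` S"
        then obtain t where "t \<in> S" "q = qt t" by blast
        then show "q \<in> {q. to_nat q \<le> M}" using qt lt by fastforce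
      qed
      then have "finite (qt ` S)" using finite_to_nat_le finite_subset by blast
      from pigeonhole_infinite[OF infS this] obtain t0 where t0: "t0 \<in> S" "infinite {t\<in>S. qt t = qt t0}" by blast
      define q where "q = qt t0"
      define g where "g n = cc (of_rat q) (pre x n)" for n
      have mg: "mono g" unfolding g_def by (rule cc_mono)
      have I: "\<forall>N. \<exists>t\<ge>N. t \<in> S \<and> qt t = q"
        using t0(2) unfolding infinite_nat_iff_unbounded_le q_def by blast
      have "\<forall>N. \<exists>t\<ge>N. g t < g (Suc t)"
      proof
        fix N
        from I obtain t where "t \<ge> N" "t \<in> S" "qt t = q" by blast
        then show "\<exists>t\<ge>N. g t < g (Suc t)" using qt unfolding g_def by fastforce
      qed
      from events_unbounded[OF mg this] obtain n where n: "M \<le> g n" by blast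
      from I obtain t where t: "t \<ge> n" "t \<in> S" "qt t = q" by blast
      have "g n \<le> g (Suc t)" using mg t(1) by (simp add: monoD)
      moreover have "g (Suc t) < M" using lt t unfolding g_def by auto
      ultimately show False using n by simp
    qed
    then obtain t where t: "t \<in> S" "M \<le> cc (of_rat (qt t)) (pre x (Suc t))" by blast
    have "PP (of_rat (qt t)) M x" using cc_PP[OF x M1 t(2)] .
    moreover have "r \<le> of_rat (qt t)" using t(1) qt unfolding S_def by auto
    ultimately show ?thesis by (rule PP_mono_q[rotated])
  qed
  have "\<forall>m. PP r m x"
  proof
    fix m show "PP r m x"
    proof (cases "m = 0")
      case True
      then show ?thesis using PP_mono_le[OF x, of 0 1] PM[of 1] by simp
    next
      case False
      then show ?thesis using PM by simp
    qed
  qed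
  then show ?thesis by (rule PP_all[OF x])
qed

lemma uu_limsup: assumes x: "x \<in> branches T"
  shows "limsup (\<lambda>t. ereal (uu (pre x (Suc t)))) = ereal (f x)"
proof -
  let ?a = "\<lambda>t. ereal (uu (pre x (Suc t)))"
  have lim: "limsup ?a = (INF N. SUP m\<in>{N..}. ?a m)" by (rule limsup_INF_SUP)
  have ge: "ereal (f x) \<le> limsup ?a"
  proof -
    have "ereal (f x) \<le> (SUP m\<in>{N..}. ?a m)" for N
    proof (rule ccontr)
      assume "\<not> ?thesis"
      then have "(SUP m\<in>{N..}. ?a m) < ereal (f x)" by simp
      from ereal_dense2[OF this] obtain y where y: "(SUP m\<in>{N..}. ?a m) < ereal y" "ereal y < ereal (f x)" by blast
      then have "y < f x" by simp
      from Rats_dense_in_real[OF this] obtain r where r: "r \<in> \<rat>" "y < r" "r < f x" by blast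
      from r(1) obtain q where q: "r = of_rat q" by (auto elim: Rats_cases)
      have "of_rat q \<le> f x" using q r by simp
      from uu_lower[OF x this, of N] obtain t where t: "t \<ge> N" "of_rat q \<le> uu (pre x (Suc t))" by blast
      have "ereal r \<le> ?a t" using t q by simp
      also have "?a t \<le> (SUP m\<in>{N..}. ?a m)" using t(1) by (intro SUP_upper) simp
      also note y(1)
      finally have "ereal r < ereal y" .
      then show False using r(2) by simp
    qed
    then show ?thesis unfolding lim by (auto intro: INF_greatest)
  qed
  have le: "limsup ?a \<le> ereal (f x)"
  proof (rule ccontr)
    assume "\<not> ?thesis"
    then have "ereal (f x) < limsup ?a" by simp
    from ereal_dense2[OF this] obtain z where z: "ereal (f x) < ereal z" "ereal z < limsup ?a" by blast
    have "\<forall>N. \<exists>t\<ge>N. z \<le> uu (pre x (Suc t))"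
    proof
      fix N
      have "ereal z < (SUP m\<in>{N..}. ?a m)" using z(2) unfolding lim by (rule less_INF_D) simp
      then obtain t where "t \<in> {N..}" "ereal z < ?a t" by (auto simp: less_SUP_iff)
      then show "\<exists>t\<ge>N. z \<le> uu (pre x (Suc t))" by auto
    qed
    from uu_upper[OF x this] z(1) show False by simp
  qed
  from ge le show ?thesis by (rule antisym[rotated])
qed

end

definition nice :: "'a list set \<Rightarrow> ((nat \<Rightarrow> 'a) \<Rightarrow> real) \<Rightarrow> bool" where
  "nice T f \<longleftrightarrow> (\<exists>h. (\<forall>k. lscC T (h k)) \<and> (\<forall>k. \<forall>x\<in>branches T. h (Suc k) x \<le> h k x)
      \<and> (\<forall>x\<in>branches T. (INF k. h k x) = ereal (f x)))"

lemma nice_limsup: assumes "nice T f" shows "limsup_function T f"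
proof -
  obtain h where h: "\<And>k. lscC T (h k)" "\<And>k x. x \<in> branches T \<Longrightarrow> h (Suc k) x \<le> h k x"
     "\<And>x. x \<in> branches T \<Longrightarrow> (INF k. h k x) = ereal (f x)"
    using assms unfolding nice_def by blast
  show ?thesis unfolding limsup_function_def
    using uu_limsup[of T h f, OF h] by (metis)
qed



definition hh :: "('a list \<Rightarrow> real) \<Rightarrow> nat \<Rightarrow> (nat \<Rightarrow> 'a) \<Rightarrow> ereal" where
  "hh u k x = (SUP t\<in>{k..}. ereal (u (pre x (Suc t))))"

lemma hh_lscC: "lscC T (hh u k)"
  unfolding lscC_def
proof (intro ballI allI impI)
  fix x c assume x: "x \<in> branches T" and c: "c < hh u k x"
  then obtain t where t: "t \<ge> k" "c < ereal (u (pre x (Suc t)))"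
    unfolding hh_def less_SUP_iff by auto
  show "\<exists>n. \<forall>y\<in>branches T. (\<forall>i<n. y i = x i) \<longrightarrow> c < hh u k y"
  proof (intro exI[of _ "Suc t"] ballI impI)
    fix y assume "y \<in> branches T" "\<forall>i<Suc t. y i = x i"
    then have eq: "pre y (Suc t) = pre x (Suc t)" by (simp only: pre_eq_iff)
    have "c < ereal (u (pre y (Suc t)))" unfolding eq by (rule t(2))
    also have "\<dots> \<le> hh u k y" unfolding hh_def using t(1) by (intro SUP_upper) simp
    finally show "c < hh u k y" .
  qed
qed

lemma hh_dec: "hh u (Suc k) x \<le> hh u k x"
  unfolding hh_def by (rule SUP_subset_mono) auto

lemma hh_INF: "(INF k. hh u k x) = limsup (\<lambda>t. ereal (u (pre x (Suc t))))"
  unfolding hh_def by (simp add: limsup_INF_SUP)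

lemma limsup_nice: assumes "limsup_function T f" shows "nice T f"
proof -
  obtain u where u: "\<forall>x\<in>branches T. ereal (f x) = limsup (\<lambda>t. ereal (u (pre x (Suc t))))"
    using assms unfolding limsup_function_def by blast
  show ?thesis unfolding nice_def
    by (intro exI[of _ "hh u"] conjI allI ballI hh_lscC hh_dec) (simp add: hh_INF u)
qed

lemma lsc_nice: assumes "lower_semicont (branch_topology T) f" shows "nice T f"
  unfolding nice_def
  by (intro exI[of _ "\<lambda>k x. ereal (f x)"] conjI allI ballI lsc_imp_lscC[OF assms]) simp_all

lemma dec_le_gen: assumes "\<And>k. h (Suc k) x \<le> (h k x :: ereal)" "k \<le> m" shows "h m x \<le> h k x"
  using assms(2)
proof (induction m rule: dec_induct)
  case (step n)
  from assms(1)[of n] step.IH show ?case by (rule order_trans)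
qed simp

lemma nice_closed:
  assumes nf: "\<And>n. nice T (fs n)"
    and dec: "\<And>n x. x \<in> branches T \<Longrightarrow> fs (Suc n) x \<le> fs n x"
    and conv: "\<And>x. x \<in> branches T \<Longrightarrow> (\<lambda>n. fs n x) \<longlonglongrightarrow> f x"
  shows "nice T f"
proof -
  have "\<forall>n. \<exists>h. (\<forall>k. lscC T (h k)) \<and> (\<forall>k. \<forall>x\<in>branches T. h (Suc k) x \<le> h k x)
      \<and> (\<forall>x\<in>branches T. (INF k. h k x) = ereal (fs n x))"
    using nf unfolding nice_def by blast
  from choice[OF this] obtain hs where hsP: "\<forall>n. (\<forall>k. lscC T (hs n k)) \<and> (\<forall>k. \<forall>x\<in>branches T. hs n (Suc k) x \<le> hs n k x)
      \<and> (\<forall>x\<in>branches T. (INF k. hs n k x) = ereal (fs n x))" by blast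
  have hs: "\<And>n k. lscC T (hs n k)"
    "\<And>n k x. x \<in> branches T \<Longrightarrow> hs n (Suc k) x \<le> hs n k x"
    "\<And>n x. x \<in> branches T \<Longrightarrow> (INF k. hs n k x) = ereal (fs n x)"
    using hsP by blast+
  define H where "H k x = Min ((\<lambda>i. hs i k x) ` {..k})" for k x
  have Hle: "H k x \<le> hs i k x" if "i \<le> k" for i k x
    unfolding H_def using that by (intro Min_le) auto
  have Hgr: "c < H k x \<longleftrightarrow> (\<forall>i\<le>k. c < hs i k x)" for c k x
    unfolding H_def by (subst Min_gr_iff) auto
  have Hge: "c \<le> H k x \<longleftrightarrow> (\<forall>i\<le>k. c \<le> hs i k x)" for c k x
    unfolding H_def by (subst Min_ge_iff) auto
  have lsc: "lscC T (H k)" for k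
    unfolding lscC_def
  proof (intro ballI allI impI)
    fix x c assume x: "x \<in> branches T" and c: "c < H k x"
    have "\<forall>i\<in>{..k}. \<exists>n. \<forall>y\<in>branches T. (\<forall>j<n. y j = x j) \<longrightarrow> c < hs i k y"
    proof
      fix i assume "i \<in> {..k}"
      then have "c < hs i k x" using c Hgr by auto
      then show "\<exists>n. \<forall>y\<in>branches T. (\<forall>j<n. y j = x j) \<longrightarrow> c < hs i k y"
        using hs(1)[of i k] x unfolding lscC_def by blast
    qed
    from bchoice[OF this] obtain nn where nn: "\<forall>i\<in>{..k}. \<forall>y\<in>branches T. (\<forall>j<nn i. y j = x j) \<longrightarrow> c < hs i k y"
      by blast
    show "\<exists>n. \<forall>y\<in>branches T. (\<forall>j<n. y j = x j) \<longrightarrow> c < H k y"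
    proof (intro exI[of _ "Max (nn ` {..k})"] ballI impI)
      fix y assume y: "y \<in> branches T" "\<forall>j<Max (nn ` {..k}). y j = x j"
      have "c < hs i k y" if "i \<le> k" for i
      proof -
        have "nn i \<le> Max (nn ` {..k})" using that by (intro Max_ge) auto
        then have "\<forall>j<nn i. y j = x j" using y(2) by auto
        then show ?thesis using nn y(1) that by auto
      qed
      then show "c < H k y" using Hgr by blast
    qed
  qed
  have decH: "H (Suc k) x \<le> H k x" if x: "x \<in> branches T" for k x
  proof -
    have "H (Suc k) x \<le> hs i k x" if "i \<le> k" for i
      using order_trans[OF Hle[of i "Suc k" x] hs(2)[OF x, of i k]] that by simp
    then show ?thesis using Hge by blast
  qed
  have fs_ge: "f x \<le> fs i x" if x: "x \<in> branches T" for i x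
  proof -
    have "decseq (\<lambda>n. fs n x)" using dec[OF x] by (intro decseq_SucI)
    from decseq_ge[OF this conv[OF x]] show ?thesis .
  qed
  have hs_ge: "ereal (fs i x) \<le> hs i k x" if x: "x \<in> branches T" for i k x
  proof -
    have "(INF k. hs i k x) \<le> hs i k x" by (rule INF_lower) simp
    then show ?thesis using hs(3)[OF x, of i] by simp
  qed
  have INFH: "(INF k. H k x) = ereal (f x)" if x: "x \<in> branches T" for x
  proof (rule antisym)
    have "ereal (f x) \<le> H k x" for k
    proof -
      have "ereal (f x) \<le> hs i k x" for i
      proof -
        have "ereal (f x) \<le> ereal (fs i x)" using fs_ge[OF x, of i] by simp
        also have "\<dots> \<le> hs i k x" by (rule hs_ge[OF x])
        finally show ?thesis .
      qed
      then show ?thesis using Hge by blast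
    qed
    then show "ereal (f x) \<le> (INF k. H k x)" by (auto intro: INF_greatest)
    have "(INF k. H k x) \<le> ereal (fs i x)" for i
    proof -
      have "(INF k. H k x) \<le> hs i k x" for k
      proof -
        have "(INF k. H k x) \<le> H (max i k) x" by (rule INF_lower) simp
        also have "\<dots> \<le> hs i (max i k) x" by (rule Hle) simp
        also have "\<dots> \<le> hs i k x" by (rule dec_le_gen[of "hs i"]) (auto intro: hs(2)[OF x])
        finally show ?thesis .
      qed
      then have "(INF k. H k x) \<le> (INF k. hs i k x)" by (auto intro: INF_greatest)
      then show ?thesis using hs(3)[OF x] by simp
    qed
    moreover have "(\<lambda>n. ereal (fs n x)) \<longlonglongrightarrow> ereal (f x)" using conv[OF x] by simp
    ultimately show "(INF k. H k x) \<le> ereal (f x)"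
      by (intro LIMSEQ_le_const[where X="\<lambda>n. ereal (fs n x)"]) auto
  qed
  show ?thesis unfolding nice_def
    by (intro exI[of _ H] conjI allI ballI lsc decH INFH)
qed



lemma limsup_in_C:
  assumes C: "good_collection T C" and f: "f \<in> branches T \<rightarrow>\<^sub>E (UNIV :: real set)"
    and lf: "limsup_function T f"
  shows "f \<in> C"
proof -
  obtain u where u: "\<forall>x\<in>branches T. ereal (f x) = limsup (\<lambda>t. ereal (u (pre x (Suc t))))"
    using lf unfolding limsup_function_def by blast
  have INFu: "(INF k. hh u k x) = ereal (f x)" if "x \<in> branches T" for x
    using u that by (simp add: hh_INF)
  have fin: "\<bar>hh u N x\<bar> \<noteq> \<infinity>" if x: "x \<in> branches T" for N x
  proof -
    have lo: "ereal (f x) \<le> hh u N x" unfolding INFu[OF x, symmetric] by (rule INF_lower) simp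
    have "(INF k. hh u k x) < \<infinity>" using INFu[OF x] by simp
    then have "\<exists>k\<in>UNIV. hh u k x < \<infinity>" by (simp only: INF_less_iff)
    then obtain k where k: "hh u k x < \<infinity>" by blast
    define B where "B = Max (insert 0 ((\<lambda>t. u (pre x (Suc t))) ` {..<k}))"
    have "hh u N x \<le> max (ereal B) (hh u k x)"
      unfolding hh_def[of u N]
    proof (rule SUP_least)
      fix t assume "t \<in> {N..}"
      show "ereal (u (pre x (Suc t))) \<le> max (ereal B) (hh u k x)"
      proof (cases "t < k")
        case True
        then have "u (pre x (Suc t)) \<le> B" unfolding B_def by (intro Max_ge) auto
        then show ?thesis by (simp add: le_max_iff_disj)
      next
        case False
        then have "ereal (u (pre x (Suc t))) \<le> hh u k x" unfolding hh_def by (intro SUP_upper) simp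
        then show ?thesis by (simp add: le_max_iff_disj)
      qed
    qed
    also have "\<dots> < \<infinity>" using k by (simp add: max_def)
    finally have "hh u N x < \<infinity>" .
    moreover have "hh u N x > -\<infinity>" using lo by (cases "hh u N x") auto
    ultimately show ?thesis by auto
  qed
  define g where "g N x = (if x \<in> branches T then real_of_ereal (hh u N x) else undefined)" for N x
  have ge: "ereal (g N x) = hh u N x" if x: "x \<in> branches T" for N x
    using fin[OF x, of N] x by (simp add: g_def ereal_real')
  have gE: "g N \<in> branches T \<rightarrow>\<^sub>E (UNIV :: real set)" for N
    by (auto simp: g_def PiE_iff extensional_def)
  have glsc: "lower_semicont (branch_topology T) (g N)" for N
  proof (rule lscC_imp_lsc, intro ballI allI impI)
    fix x c assume x: "x \<in> branches T" and c: "c < g N x"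
    have "ereal c < ereal (g N x)" using c by simp
    then have "ereal c < hh u N x" using ge[OF x, of N] by simp
    then obtain n where n: "\<forall>y\<in>branches T. (\<forall>i<n. y i = x i) \<longrightarrow> ereal c < hh u N y"
      using hh_lscC[of T u N] x unfolding lscC_def by blast
    show "\<exists>n. \<forall>y\<in>branches T. (\<forall>i<n. y i = x i) \<longrightarrow> c < g N y"
    proof (intro exI[of _ n] ballI impI)
      fix y assume y: "y \<in> branches T" "\<forall>i<n. y i = x i"
      then have "ereal c < ereal (g N y)" using n ge[OF y(1), of N] by simp
      then show "c < g N y" by simp
    qed
  qed
  have c2: "\<forall>f \<in> branches T \<rightarrow>\<^sub>E (UNIV :: real set).
        lower_semicont (branch_topology T) f \<longrightarrow> f \<in> C"
    using C unfolding good_collection_def by (elim conjE)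
  have gC: "g N \<in> C" for N
    using c2 gE glsc by blast
  have gdec: "\<forall>n. \<forall>x\<in>branches T. g (Suc n) x \<le> g n x"
  proof (intro allI ballI)
    fix n x assume x: "x \<in> branches T"
    have "ereal (g (Suc n) x) \<le> ereal (g n x)" using ge[OF x, of "Suc n"] ge[OF x, of n] hh_dec[of u n x] by simp
    then show "g (Suc n) x \<le> g n x" by simp
  qed
  have gconv: "\<forall>x\<in>branches T. (\<lambda>n. g n x) \<longlonglongrightarrow> f x"
  proof
    fix x assume x: "x \<in> branches T"
    have "decseq (\<lambda>N. hh u N x)" by (rule decseq_SucI) (rule hh_dec)
    from LIMSEQ_INF[OF this] have "(\<lambda>N. hh u N x) \<longlonglongrightarrow> ereal (f x)" using INFu[OF x] by simp
    moreover have "(\<lambda>N. hh u N x) = (\<lambda>N. ereal (g N x))" using ge[OF x] by simp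
    ultimately show "(\<lambda>n. g n x) \<longlonglongrightarrow> f x" by simp
  qed
  have "\<forall>(fs :: nat \<Rightarrow> (nat \<Rightarrow> 'a) \<Rightarrow> real) f.
        (\<forall>n. fs n \<in> C) \<and> (\<forall>n. \<forall>x\<in>branches T. fs (Suc n) x \<le> fs n x)
        \<and> f \<in> branches T \<rightarrow>\<^sub>E (UNIV :: real set)
        \<and> (\<forall>x\<in>branches T. (\<lambda>n. fs n x) \<longlonglongrightarrow> f x)
        \<longrightarrow> f \<in> C" using C unfolding good_collection_def by (elim conjE)
  from this[rule_format, of g f] show ?thesis using gC gdec f gconv by simp
qed

theorem mainTheorem3:
  fixes A :: "'a set" and T :: "'a list set"
  assumes "countable A" and "A \<noteq> {}" and "pruned_tree A T"
  defines "L \<equiv> {f \<in> branches T \<rightarrow>\<^sub>E (UNIV :: real set). limsup_function T f}"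
  shows "good_collection T L \<and> (\<forall>C. good_collection T C \<longrightarrow> L \<subseteq> C)"
proof
  have c1: "L \<subseteq> branches T \<rightarrow>\<^sub>E (UNIV :: real set)" unfolding L_def by blast
  have c2: "\<forall>f \<in> branches T \<rightarrow>\<^sub>E (UNIV :: real set).
        lower_semicont (branch_topology T) f \<longrightarrow> f \<in> L"
  proof (intro ballI impI)
    fix f assume "f \<in> branches T \<rightarrow>\<^sub>E (UNIV :: real set)" "lower_semicont (branch_topology T) f"
    then show "f \<in> L" unfolding L_def using nice_limsup[OF lsc_nice] by simp
  qed
  have c3: "\<forall>(fs :: nat \<Rightarrow> (nat \<Rightarrow> 'a) \<Rightarrow> real) f.
        (\<forall>n. fs n \<in> L) \<and> (\<forall>n. \<forall>x\<in>branches T. fs (Suc n) x \<le> fs n x)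
        \<and> f \<in> branches T \<rightarrow>\<^sub>E (UNIV :: real set)
        \<and> (\<forall>x\<in>branches T. (\<lambda>n. fs n x) \<longlonglongrightarrow> f x)
        \<longrightarrow> f \<in> L"
  proof (intro allI impI)
    fix fs :: "nat \<Rightarrow> (nat \<Rightarrow> 'a) \<Rightarrow> real" and f
    assume H: "(\<forall>n. fs n \<in> L) \<and> (\<forall>n. \<forall>x\<in>branches T. fs (Suc n) x \<le> fs n x)
        \<and> f \<in> branches T \<rightarrow>\<^sub>E (UNIV :: real set)
        \<and> (\<forall>x\<in>branches T. (\<lambda>n. fs n x) \<longlonglongrightarrow> f x)"
    have "nice T (fs n)" for n
    proof -
      have "fs n \<in> L" using H by blast
      then show ?thesis unfolding L_def by (simp add: limsup_nice)
    qed
    moreover have "\<And>n x. x \<in> branches T \<Longrightarrow> fs (Suc n) x \<le> fs n x" using H by blast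
    moreover have "\<And>x. x \<in> branches T \<Longrightarrow> (\<lambda>n. fs n x) \<longlonglongrightarrow> f x" using H by blast
    ultimately have "nice T f" by (rule nice_closed)
    then have "limsup_function T f" by (rule nice_limsup)
    then show "f \<in> L" using H unfolding L_def by simp
  qed
  show "good_collection T L" unfolding good_collection_def using c1 c2 c3 by (intro conjI)
  show "\<forall>C. good_collection T C \<longrightarrow> L \<subseteq> C"
  proof (intro allI impI subsetI)
    fix C f assume "good_collection T C" "f \<in> L"
    then show "f \<in> C" unfolding L_def using limsup_in_C[of T C f] by simp
  qed
qed


end
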